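(* Let $\gamma\in\{\tfrac12,1,\dots\}$, $\varepsilon\in\{0,\tfrac12\}$ and $j\in\tfrac12\mathbb Z$ with $j-\varepsilon\notin\mathbb Z$. Then on each $J_0$-eigenspace $V_M$ ($M\in\varepsilon+\gamma+\mathbb Z$, spanned by $|\gamma,\mu\rangle\otimes|j,M-\mu\rangle$, $\mu\in\{-\gamma,\dots,\gamma\}$) the Casimir $Q$ has eigenvalues $-(j+\mu)(j+\mu+1)$, $\mu\in\{-\gamma,\dots,\gamma\}$ (counted with algebraic multiplicity), and $Q$ is diagonalisable on $F_\gamma\otimes C^\varepsilon_j$ if and only if $j>\gamma-1$ or $j<-\gamma$.
   Context: Let $\mathfrak{spin}(2,1)_{\mathbb C}$ have basis $J_0,J_+,J_-$ with $[J_0,J_\pm]=\pm J_\pm$, $[J_+,J_-]=-2J_0$, and Casimir $Q=-J_0(J_0-1)+J_+J_-$. Set $\Gamma_\pm(j,m)=\mathrm i\sqrt{j\mp m}\,\sqrt{j\pm m+1}$. A module with basis $\{|j,m\rangle\}$ has action $J_0|j,m\rangle=m|j,m\rangle$, $J_\pm|j,m\rangle=\Gamma_\pm(j,m)|j,m\pm1\rangle$. The continuous series module $C^\varepsilon_j$ has basis $|j,m\rangle$, $m\in\varepsilon+\mathbb Z$. The finite-dimensional module $F_\gamma$ has basis $|\gamma,\mu\rangle$, $\mu\in\{-\gamma,\dots,\gamma\}$. On a tensor product the generators act as $J_0\otimes1+1\otimes J_0$, $J_\pm\otimes1+1\otimes J_\pm$. *)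

theory Defs
  imports Complex_Main "Jordan_Normal_Form.Char_Poly"
begin

text \<open>Vectors of F_gamma (x) C_j^eps are finitely supported functions on pairs (mu, m),
  the pair (mu, m) standing for the basis vector |gamma,mu> (x) |j,m>.\<close>

definition Gam_plus :: "real \<Rightarrow> real \<Rightarrow> complex" where
  "Gam_plus j m = \<i> * csqrt (complex_of_real (j - m)) * csqrt (complex_of_real (j + m + 1))"

definition Gam_minus :: "real \<Rightarrow> real \<Rightarrow> complex" where
  "Gam_minus j m = \<i> * csqrt (complex_of_real (j + m)) * csqrt (complex_of_real (j - m + 1))"

definition J0_op :: "(real \<times> real \<Rightarrow> complex) \<Rightarrow> (real \<times> real \<Rightarrow> complex)" where
  "J0_op v = (\<lambda>(mu, m). complex_of_real (mu + m) * v (mu, m))"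

definition Jp_op :: "real \<Rightarrow> real \<Rightarrow> (real \<times> real \<Rightarrow> complex) \<Rightarrow> (real \<times> real \<Rightarrow> complex)" where
  "Jp_op \<gamma> j v = (\<lambda>(mu, m). Gam_plus \<gamma> (mu - 1) * v (mu - 1, m) + Gam_plus j (m - 1) * v (mu, m - 1))"

definition Jm_op :: "real \<Rightarrow> real \<Rightarrow> (real \<times> real \<Rightarrow> complex) \<Rightarrow> (real \<times> real \<Rightarrow> complex)" where
  "Jm_op \<gamma> j v = (\<lambda>(mu, m). Gam_minus \<gamma> (mu + 1) * v (mu + 1, m) + Gam_minus j (m + 1) * v (mu, m + 1))"

definition Q_op :: "real \<Rightarrow> real \<Rightarrow> (real \<times> real \<Rightarrow> complex) \<Rightarrow> (real \<times> real \<Rightarrow> complex)" where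
  "Q_op \<gamma> j v = (\<lambda>a. - J0_op (\<lambda>b. J0_op v b - v b) a + Jp_op \<gamma> j (Jm_op \<gamma> j v) a)"

definition tens_index :: "real \<Rightarrow> real \<Rightarrow> (real \<times> real) set" where
  "tens_index \<gamma> \<epsilon> = {(mu, m). (\<exists>k::nat. real k \<le> 2 * \<gamma> \<and> mu = - \<gamma> + real k) \<and> m - \<epsilon> \<in> \<int>}"

definition tens_space :: "real \<Rightarrow> real \<Rightarrow> (real \<times> real \<Rightarrow> complex) set" where
  "tens_space \<gamma> \<epsilon> = {v. finite {a. v a \<noteq> 0} \<and> {a. v a \<noteq> 0} \<subseteq> tens_index \<gamma> \<epsilon>}"

definition diagonalisable_on :: "('a \<Rightarrow> complex) set \<Rightarrow> (('a \<Rightarrow> complex) \<Rightarrow> ('a \<Rightarrow> complex)) \<Rightarrow> bool" where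
  "diagonalisable_on S T \<longleftrightarrow>
     (\<forall>v\<in>S. \<exists>ws. (\<forall>w\<in>set ws. w \<in> S \<and> (\<exists>c. T w = (\<lambda>a. c * w a))) \<and> v = (\<lambda>a. \<Sum>w\<leftarrow>ws. w a))"

definition basis_vec :: "'a \<Rightarrow> ('a \<Rightarrow> complex)" where
  "basis_vec b = (\<lambda>a. if a = b then 1 else 0)"

definition fdim :: "real \<Rightarrow> nat" where
  "fdim \<gamma> = nat \<lfloor>2 * \<gamma>\<rfloor> + 1"

definition wt :: "real \<Rightarrow> nat \<Rightarrow> real" where
  "wt \<gamma> k = - \<gamma> + real k"

definition Q_mat_VM :: "real \<Rightarrow> real \<Rightarrow> real \<Rightarrow> complex mat" where
  "Q_mat_VM \<gamma> j M = mat (fdim \<gamma>) (fdim \<gamma>)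
     (\<lambda>(k, l). Q_op \<gamma> j (basis_vec (wt \<gamma> l, M - wt \<gamma> l)) (wt \<gamma> k, M - wt \<gamma> k))"

end

theory Submission
  imports Defs
begin


fun cont :: "(nat \<Rightarrow> 'a::comm_ring_1) \<Rightarrow> (nat \<Rightarrow> 'a) \<Rightarrow> nat \<Rightarrow> 'a" where
  "cont a p 0 = 1"
| "cont a p (Suc 0) = a 0"
| "cont a p (Suc (Suc n)) = a (Suc n) * cont a p (Suc n) - p n * cont a p n"

lemma det_tridiag:
  fixes f :: "nat \<times> nat \<Rightarrow> 'a::comm_ring_1"
  assumes "\<And>i j. i < n \<Longrightarrow> j < n \<Longrightarrow> Suc i < j \<or> Suc j < i \<Longrightarrow> f (i,j) = 0"
  shows "det (mat n n f) = cont (\<lambda>k. f (k,k)) (\<lambda>k. f (k, Suc k) * f (Suc k, k)) n"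
  using assms
proof (induction n arbitrary: f rule: less_induct)
  case (less n)
  show ?case
  proof (cases n)
    case 0 then show ?thesis by (simp add: det_def)
  next
    case (Suc n1)
    show ?thesis
    proof (cases n1)
      case 0
      with Suc show ?thesis by (simp add: det_def)
    next
      case (Suc k)
      have n: "n = Suc (Suc k)" using \<open>n = Suc n1\<close> Suc by simp
      let ?B = "mat n n f"
      let ?c = "cont (\<lambda>k. f (k,k)) (\<lambda>k. f (k, Suc k) * f (Suc k, k))"
      have B: "?B \<in> carrier_mat n n" by simp
      have e1: "det ?B = (\<Sum>j<n. ?B $$ (Suc k, j) * cofactor ?B (Suc k) j)"
        by (rule laplace_expansion_row[OF B], simp add: n)
      have e2: "(\<Sum>j<n. ?B $$ (Suc k, j) * cofactor ?B (Suc k) j) = (\<Sum>j<k. ?B $$ (Suc k, j) * cofactor ?B (Suc k) j)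
           + ?B $$ (Suc k, k) * cofactor ?B (Suc k) k + ?B $$ (Suc k, Suc k) * cofactor ?B (Suc k) (Suc k)"
        by (simp add: n)
      have e3: "(\<Sum>j<k. ?B $$ (Suc k, j) * cofactor ?B (Suc k) j) = 0"
      proof (rule sum.neutral, intro ballI)
        fix j assume "j \<in> {..<k}"
        then have "f (Suc k, j) = 0" by (intro less.prems, auto simp: n)
        then show "?B $$ (Suc k, j) * cofactor ?B (Suc k) j = 0" using \<open>j \<in> {..<k}\<close> by (simp add: n)
      qed
      have md: "mat_delete ?B (Suc k) (Suc k) = mat (Suc k) (Suc k) f"
        by (rule eq_matI, auto simp: mat_delete_def n)
      have IH1: "det (mat (Suc k) (Suc k) f) = ?c (Suc k)"
        by (rule less.IH, simp add: n, rule less.prems, auto simp: n)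
      have e4: "cofactor ?B (Suc k) (Suc k) = ?c (Suc k)"
        unfolding cofactor_def md IH1 by simp
      have e5: "cofactor ?B (Suc k) k = - (f (k, Suc k) * ?c k)"
      proof -
        define C where "C = mat_delete ?B (Suc k) k"
        have C: "C \<in> carrier_mat (Suc k) (Suc k)" unfolding C_def using mat_delete_carrier[OF B, of "Suc k" k] by (simp add: n)
        have Cent: "\<And>i j. i < Suc k \<Longrightarrow> j < Suc k \<Longrightarrow> C $$ (i,j) = f (i, if j < k then j else Suc j)"
          unfolding C_def mat_delete_def by (auto simp: n)
        have d1: "det C = (\<Sum>i<Suc k. C $$ (i, k) * cofactor C i k)"
          by (rule laplace_expansion_column[OF C], simp)
        have d2: "(\<Sum>i<k. C $$ (i, k) * cofactor C i k) = 0"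
        proof (rule sum.neutral, intro ballI)
          fix i assume "i \<in> {..<k}"
          then have "f (i, Suc k) = 0" by (intro less.prems, auto simp: n)
          then show "C $$ (i, k) * cofactor C i k = 0" using \<open>i \<in> {..<k}\<close> by (simp add: Cent)
        qed
        have md2: "mat_delete C k k = mat k k f"
          by (rule eq_matI, insert C, auto simp: mat_delete_def Cent)
        have IH2: "det (mat k k f) = ?c k"
          by (rule less.IH, simp add: n, rule less.prems, auto simp: n)
        have d3: "cofactor C k k = ?c k" unfolding cofactor_def md2 IH2 by simp
        have dC: "det C = f (k, Suc k) * ?c k"
          using d1 d2 d3 by (simp add: Cent)
        have "cofactor ?B (Suc k) k = (-1)^(Suc k + k) * det C" unfolding cofactor_def C_def by simp
        moreover have "(-1::'a)^(Suc k + k) = -1" by (simp add: power_add)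
        ultimately show ?thesis using dC by simp
      qed
      have "det ?B = f (Suc k, k) * (- (f (k, Suc k) * ?c k)) + f (Suc k, Suc k) * ?c (Suc k)"
        using e1 e2 e3 e4 e5 by (simp add: n)
      then show ?thesis by (simp add: n algebra_simps)
    qed
  qed
qed



lemma cont_cong: "(\<And>k. k < n \<Longrightarrow> a k = a' k) \<Longrightarrow> (\<And>k. Suc k < n \<Longrightarrow> p k = p' k) \<Longrightarrow> cont a p n = cont a' p' n"
proof (induction n rule: less_induct)
  case (less n)
  show ?case
  proof (cases n)
    case 0 then show ?thesis by simp
  next
    case (Suc n1)
    show ?thesis
    proof (cases n1)
      case 0 with Suc less.prems show ?thesis by simp
    next
      case (Suc k)
      have h1: "cont a p (Suc k) = cont a' p' (Suc k)" by (rule less.IH, auto simp: \<open>n = Suc n1\<close> Suc less.prems)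
      have h2: "cont a p k = cont a' p' k" by (rule less.IH, auto simp: \<open>n = Suc n1\<close> Suc less.prems)
      have "a (Suc k) = a' (Suc k)" "p k = p' k" by (auto simp: \<open>n = Suc n1\<close> Suc less.prems)
      then show ?thesis using h1 h2 by (simp add: \<open>n = Suc n1\<close> Suc)
    qed
  qed
qed

lemma poly_cont: "poly (cont a p n) z = cont (\<lambda>k. poly (a k) z) (\<lambda>k. poly (p k) z) n"
  by (induction a p n rule: cont.induct) auto

definition aaG :: "'a::comm_ring_1 \<Rightarrow> 'a \<Rightarrow> 'a \<Rightarrow> 'a \<Rightarrow> 'a" where
  "aaG g j M mu = -(M*(M-1)) - (g - mu + 1)*(g+mu) - (j - (M - mu) + 1)*(j + (M - mu))"
definition ppG :: "'a::comm_ring_1 \<Rightarrow> 'a \<Rightarrow> 'a \<Rightarrow> 'a \<Rightarrow> 'a" where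
  "ppG g j M mu = (g - mu)*(g + mu + 1)*(j - (M - mu) + 1)*(j + (M - mu))"

lemma poly_aaG: "poly (aaG [:a:] [:b:] [:0,1:] [:c:]) z = aaG a b z c"
  by (simp add: aaG_def algebra_simps)
lemma poly_ppG: "poly (ppG [:a:] [:b:] [:0,1:] [:c:]) z = ppG a b z c"
  by (simp add: ppG_def algebra_simps)

definition fC :: "nat \<Rightarrow> real \<Rightarrow> real \<Rightarrow> complex \<Rightarrow> complex" where
  "fC d j M x = cont (\<lambda>k. x - aaG (of_real (real d/2)) (of_real j) (of_real M) (of_real (wt (real d/2) k)))
                      (\<lambda>k. ppG (of_real (real d/2)) (of_real j) (of_real M) (of_real (wt (real d/2) k))) (Suc d)"

definition lamC :: "nat \<Rightarrow> real \<Rightarrow> nat \<Rightarrow> complex" where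
  "lamC d j k = of_real (- (j + wt (real d/2) k) * (j + wt (real d/2) k + 1))"

lemma fC_const:
  assumes per: "\<And>M. M \<ge> \<bar>j\<bar> + real d + 2 \<Longrightarrow> fC d j (M+1) x = fC d j M x"
  shows "fC d j M x = fC d j M' x"
proof -
  define M0 where "M0 = \<bar>j\<bar> + real d + 2"
  let ?c = "complex_of_real"
  define F where "F = cont (\<lambda>k. [:x:] - aaG [:?c (real d/2):] [:?c j:] [:0,1:] [:?c (wt (real d/2) k):])
                      (\<lambda>k. ppG [:?c (real d/2):] [:?c j:] [:0,1:] [:?c (wt (real d/2) k):]) (Suc d)"
  have Fev: "poly F (?c N) = fC d j N x" for N
    unfolding F_def fC_def poly_cont by (simp only: poly_diff poly_pCons poly_0 poly_aaG poly_ppG, simp)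
  have per0: "fC d j (M0 + real i) x = fC d j M0 x" for i
  proof (induction i)
    case (Suc i)
    have "fC d j (M0 + real i + 1) x = fC d j (M0 + real i) x" by (rule per, simp add: M0_def)
    then show ?case using Suc by (simp add: algebra_simps)
  qed simp
  define G where "G = F - [:fC d j M0 x:]"
  have G0: "G = 0"
  proof (rule ccontr)
    assume "G \<noteq> 0"
    then have fin: "finite {z. poly G z = 0}" by (rule poly_roots_finite)
    have "range (\<lambda>i::nat. ?c (M0 + real i)) \<subseteq> {z. poly G z = 0}"
    proof
      fix z assume "z \<in> range (\<lambda>i::nat. ?c (M0 + real i))"
      then obtain i where "z = ?c (M0 + real i)" by auto
      then show "z \<in> {z. poly G z = 0}" using per0[of i] Fev[of "M0 + real i"] by (simp add: G_def)
    qed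
    moreover have "infinite (range (\<lambda>i::nat. ?c (M0 + real i)))"
      by (rule range_inj_infinite, auto simp: inj_def)
    ultimately show False using fin finite_subset by blast
  qed
  have "fC d j M x = fC d j M0 x" using G0 Fev[of M] by (simp add: G_def)
  moreover have "fC d j M' x = fC d j M0 x" using G0 Fev[of M'] by (simp add: G_def)
  ultimately show ?thesis by simp
qed

lemma fC_split:
  "fC (Suc d) j (real (Suc d)/2 - 1 - j) x
     = (x - lamC (Suc d) j 0) * fC d (j + 1/2) (real (Suc d)/2 - j) x"
proof -
  let ?c = "complex_of_real"
  define g where "g = real (Suc d)/2"
  define Ms where "Ms = g - 1 - j"
  have w: "wt (real (Suc d)/2) k = wt (real d/2) k - 1/2" for k
    by (simp add: wt_def field_simps)
  have a_eq: "x - aaG (?c g) (?c j) (?c Ms) (?c (wt g k)) =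
              x - aaG (?c (real d/2)) (?c (j+1/2)) (?c (g - j)) (?c (wt (real d/2) k))" for k
    unfolding g_def w Ms_def aaG_def by (simp add: field_simps)
  have p_eq: "ppG (?c g) (?c j) (?c Ms) (?c (wt g k)) =
              ppG (?c (real d/2)) (?c (j+1/2)) (?c (g - j)) (?c (wt (real d/2) k))" for k
    unfolding g_def w Ms_def ppG_def by (simp add: field_simps)
  have p0: "ppG (?c g) (?c j) (?c Ms) (?c (wt g d)) = 0"
    unfolding g_def Ms_def ppG_def wt_def by (simp add: field_simps)
  have alast: "aaG (?c g) (?c j) (?c Ms) (?c (wt g (Suc d))) = lamC (Suc d) j 0"
    unfolding g_def Ms_def aaG_def wt_def lamC_def by (simp add: field_simps)
  have "fC (Suc d) j Ms x = (x - aaG (?c g) (?c j) (?c Ms) (?c (wt g (Suc d)))) *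
      cont (\<lambda>k. x - aaG (?c g) (?c j) (?c Ms) (?c (wt g k))) (\<lambda>k. ppG (?c g) (?c j) (?c Ms) (?c (wt g k))) (Suc d)"
    unfolding fC_def g_def[symmetric] using p0 by simp
  also have "cont (\<lambda>k. x - aaG (?c g) (?c j) (?c Ms) (?c (wt g k))) (\<lambda>k. ppG (?c g) (?c j) (?c Ms) (?c (wt g k))) (Suc d)
     = fC d (j + 1/2) (g - j) x"
    unfolding fC_def by (rule cont_cong, rule a_eq, rule p_eq)
  finally show ?thesis using alast unfolding Ms_def g_def by simp
qed

lemma fC_prod:
  assumes per: "\<And>d j M x. M \<ge> \<bar>j\<bar> + real d + 2 \<Longrightarrow> fC d j (M+1) x = fC d j M x"
  shows "fC d j M x = (\<Prod>k<Suc d. x - lamC d j k)"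
proof (induction d arbitrary: j M)
  case 0
  have "fC 0 j M x = fC 0 j 0 x" by (rule fC_const, rule per)
  then show ?case by (simp add: fC_def aaG_def lamC_def wt_def algebra_simps)
next
  case (Suc d)
  have "fC (Suc d) j M x = fC (Suc d) j (real (Suc d)/2 - 1 - j) x" by (rule fC_const, rule per)
  also have "\<dots> = (x - lamC (Suc d) j 0) * fC d (j + 1/2) (real (Suc d)/2 - j) x" by (rule fC_split)
  also have "fC d (j + 1/2) (real (Suc d)/2 - j) x = (\<Prod>k<Suc d. x - lamC d (j+1/2) k)" by (rule Suc.IH)
  also have "(\<Prod>k<Suc d. x - lamC d (j+1/2) k) = (\<Prod>k<Suc d. x - lamC (Suc d) j (Suc k))"
    by (rule prod.cong, simp, simp add: lamC_def wt_def field_simps)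
  finally show ?case by (simp add: prod.lessThan_Suc_shift del: prod.lessThan_Suc)
qed



lemma csqrt_mult_self: "csqrt z * csqrt z = z"
  using power2_csqrt[of z] by (simp add: power2_eq_square)

lemma Gpm: "Gam_plus g (x - 1) * Gam_minus g x = - complex_of_real ((g - x + 1) * (g + x))"
proof -
  have "Gam_plus g (x - 1) * Gam_minus g x =
     (\<i> * \<i>) * (csqrt (of_real (g - x + 1)) * csqrt (of_real (g - x + 1))) * (csqrt (of_real (g + x)) * csqrt (of_real (g + x)))"
    unfolding Gam_plus_def Gam_minus_def
    by (simp add: algebra_simps)
  also have "\<dots> = - complex_of_real ((g - x + 1) * (g + x))"
    unfolding csqrt_mult_self by (simp add: algebra_simps)
  finally show ?thesis .
qed

lemma Gpm': "Gam_plus g x * Gam_minus g (x + 1) = - complex_of_real ((g - x) * (g + x + 1))"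
  using Gpm[of g "x+1"] by simp

lemma Gam_plus_top: "Gam_plus g g = 0" by (simp add: Gam_plus_def)
lemma Gam_minus_bot: "Gam_minus g (-g) = 0" by (simp add: Gam_minus_def)

definition DR :: "real \<Rightarrow> real \<Rightarrow> real \<Rightarrow> real \<Rightarrow> real" where
  "DR g j mu m = -((mu+m)*(mu+m-1)) - (g-mu+1)*(g+mu) - (j-m+1)*(j+m)"

lemma Q_op_eq: "Q_op g j v (mu, m) = complex_of_real (DR g j mu m) * v (mu, m)
   + Gam_plus g (mu - 1) * Gam_minus j (m + 1) * v (mu - 1, m + 1)
   + Gam_plus j (m - 1) * Gam_minus g (mu + 1) * v (mu + 1, m - 1)"
proof -
  have "Q_op g j v (mu, m) = - (of_real (mu + m) * (of_real (mu + m) * v (mu, m) - v (mu, m)))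
     + Gam_plus g (mu - 1) * (Gam_minus g mu * v (mu, m) + Gam_minus j (m + 1) * v (mu - 1, m + 1))
     + Gam_plus j (m - 1) * (Gam_minus g (mu + 1) * v (mu + 1, m - 1) + Gam_minus j m * v (mu, m))"
    unfolding Q_op_def J0_op_def Jp_op_def Jm_op_def by simp
  also have "\<dots> = (- (of_real (mu + m) * (of_real (mu + m) - 1)) + Gam_plus g (mu - 1) * Gam_minus g mu
        + Gam_plus j (m - 1) * Gam_minus j m) * v (mu, m)
     + Gam_plus g (mu - 1) * Gam_minus j (m + 1) * v (mu - 1, m + 1)
     + Gam_plus j (m - 1) * Gam_minus g (mu + 1) * v (mu + 1, m - 1)"
    by (simp add: algebra_simps)
  also have "(- (of_real (mu + m) * (of_real (mu + m) - 1)) + Gam_plus g (mu - 1) * Gam_minus g mu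
        + Gam_plus j (m - 1) * Gam_minus j m) = complex_of_real (DR g j mu m)"
    unfolding Gpm DR_def by simp
  finally show ?thesis .
qed

lemma Jp_op_eq: "Jp_op g j v (mu, m) = Gam_plus g (mu - 1) * v (mu - 1, m) + Gam_plus j (m - 1) * v (mu, m - 1)"
  unfolding Jp_op_def by simp

lemma Q_Jp_comm: "Q_op g j (Jp_op g j v) a = Jp_op g j (Q_op g j v) a"
proof -
  obtain mu m where a: "a = (mu, m)" by (cases a)
  let ?c = complex_of_real
  define a1 where "a1 = Gam_plus g (mu - 1)"
  define a2 where "a2 = Gam_plus g (mu - 2)"
  define a3 where "a3 = Gam_plus g mu"
  define b1 where "b1 = Gam_minus g mu"
  define b2 where "b2 = Gam_minus g (mu + 1)"
  define c1 where "c1 = Gam_plus j (m - 1)"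
  define c2 where "c2 = Gam_plus j (m - 2)"
  define c3 where "c3 = Gam_plus j m"
  define e1 where "e1 = Gam_minus j m"
  define e2 where "e2 = Gam_minus j (m + 1)"
  define r1 where "r1 = - ?c ((j - m) * (j + m + 1))"
  define r2 where "r2 = - ?c ((j - m + 1) * (j + m))"
  define r3 where "r3 = - ?c ((g - mu) * (g + mu + 1))"
  define r4 where "r4 = - ?c ((g - mu + 1) * (g + mu))"
  have R1: "c3 * e2 = r1" unfolding c3_def e2_def r1_def by (rule Gpm')
  have R2: "c1 * e1 = r2" unfolding c1_def e1_def r2_def by (rule Gpm)
  have R3: "a3 * b2 = r3" unfolding a3_def b2_def r3_def by (rule Gpm')
  have R4: "a1 * b1 = r4" unfolding a1_def b1_def r4_def by (rule Gpm)
  have L1: "Jp_op g j v (mu - 1, m + 1) = a2 * v (mu - 2, m + 1) + c3 * v (mu - 1, m)"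
    unfolding Jp_op_eq a2_def c3_def by (simp add: diff_diff_eq)
  have L2: "Jp_op g j v (mu + 1, m - 1) = a3 * v (mu, m - 1) + c2 * v (mu + 1, m - 2)"
    unfolding Jp_op_eq a3_def c2_def by (simp add: diff_diff_eq)
  have LHS: "Q_op g j (Jp_op g j v) a = ?c (DR g j mu m) * (a1 * v (mu - 1, m) + c1 * v (mu, m - 1))
     + a1 * e2 * (a2 * v (mu - 2, m + 1) + c3 * v (mu - 1, m))
     + c1 * b2 * (a3 * v (mu, m - 1) + c2 * v (mu + 1, m - 2))"
    unfolding a Q_op_eq L1 L2 unfolding Jp_op_eq a1_def c1_def e2_def b2_def by simp
  have Q1: "Q_op g j v (mu - 1, m) = ?c (DR g j (mu - 1) m) * v (mu - 1, m) + a2 * e2 * v (mu - 2, m + 1)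
      + c1 * b1 * v (mu, m - 1)"
    unfolding Q_op_eq a2_def e2_def c1_def b1_def by (simp add: diff_diff_eq)
  have Q2: "Q_op g j v (mu, m - 1) = ?c (DR g j mu (m - 1)) * v (mu, m - 1) + a1 * e1 * v (mu - 1, m)
      + c2 * b2 * v (mu + 1, m - 2)"
    unfolding Q_op_eq a1_def e1_def c2_def b2_def by (simp add: diff_diff_eq)
  have RHS: "Jp_op g j (Q_op g j v) a = a1 * (?c (DR g j (mu - 1) m) * v (mu - 1, m) + a2 * e2 * v (mu - 2, m + 1)
      + c1 * b1 * v (mu, m - 1)) + c1 * (?c (DR g j mu (m - 1)) * v (mu, m - 1) + a1 * e1 * v (mu - 1, m)
      + c2 * b2 * v (mu + 1, m - 2))"
    unfolding a Jp_op_eq Q1 Q2 a1_def c1_def by simp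
  have D1: "?c (DR g j mu m) - ?c (DR g j (mu - 1) m) + r1 - r2 = 0"
    unfolding r1_def r2_def DR_def by (simp add: algebra_simps)
  have D2: "?c (DR g j mu m) - ?c (DR g j mu (m - 1)) + r3 - r4 = 0"
    unfolding r3_def r4_def DR_def by (simp add: algebra_simps)
  have "Q_op g j (Jp_op g j v) a - Jp_op g j (Q_op g j v) a =
     v (mu - 1, m) * a1 * (?c (DR g j mu m) - ?c (DR g j (mu - 1) m) + c3 * e2 - c1 * e1)
   + v (mu, m - 1) * c1 * (?c (DR g j mu m) - ?c (DR g j mu (m - 1)) + a3 * b2 - a1 * b1)"
    unfolding LHS RHS by (simp add: algebra_simps)
  also have "\<dots> = 0" unfolding R1 R2 R3 R4 using D1 D2 by simp
  finally show ?thesis by simp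
qed



definition pt :: "real \<Rightarrow> real \<Rightarrow> nat \<Rightarrow> real \<times> real" where
  "pt g M l = (wt g l, M - wt g l)"

lemma fdim_half[simp]: "fdim (real d / 2) = Suc d"
  unfolding fdim_def by simp

lemma wt_Suc: "wt g (Suc k) = wt g k + 1" unfolding wt_def by simp

lemma wt_top: "wt (real d / 2) d = real d / 2" unfolding wt_def by simp
lemma wt_0: "wt g 0 = - g" unfolding wt_def by simp

lemma wt_eq_iff[simp]: "wt g k = wt g l \<longleftrightarrow> k = l" unfolding wt_def by simp

lemma pt_inj[simp]: "pt g M k = pt g M l \<longleftrightarrow> k = l" unfolding pt_def by auto

lemma bv_pt: "basis_vec (pt g M l) (pt g M k) = (if k = l then 1 else 0)"
  unfolding basis_vec_def by auto

lemma expand_fun: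
  assumes "\<And>a. (\<forall>l<n. a \<noteq> pt g M l) \<Longrightarrow> w a = 0"
  shows "(\<lambda>a. \<Sum>l<n. w (pt g M l) * basis_vec (pt g M l) a) = w"
proof
  fix a
  show "(\<Sum>l<n. w (pt g M l) * basis_vec (pt g M l) a) = w a"
  proof (cases "\<exists>l<n. a = pt g M l")
    case True
    then obtain l0 where l0: "l0 < n" "a = pt g M l0" by auto
    have "(\<Sum>l<n. w (pt g M l) * basis_vec (pt g M l) a) = (\<Sum>l<n. if l = l0 then w (pt g M l) else 0)"
      by (rule sum.cong, auto simp: l0 bv_pt)
    also have "\<dots> = w a" using l0 by simp
    finally show ?thesis .
  next
    case False
    then have "w a = 0" using assms by auto
    moreover have "(\<Sum>l<n. w (pt g M l) * basis_vec (pt g M l) a) = 0"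
      by (rule sum.neutral, use False in \<open>auto simp: basis_vec_def\<close>)
    ultimately show ?thesis by simp
  qed
qed

lemma Q_e_supp:
  assumes l0: "l0 < Suc d" and a: "\<forall>l<Suc d. a \<noteq> pt (real d/2) M l"
  shows "Q_op (real d/2) j (basis_vec (pt (real d/2) M l0)) a = 0"
proof -
  let ?g = "real d / 2"
  obtain mu m where am: "a = (mu, m)" by (cases a)
  have t1: "basis_vec (pt ?g M l0) (mu, m) = 0" using a l0 am by (auto simp: basis_vec_def)
  have t2: "Gam_plus ?g (mu - 1) * Gam_minus j (m + 1) * basis_vec (pt ?g M l0) (mu - 1, m + 1) = 0"
  proof (cases "(mu - 1, m + 1) = pt ?g M l0")
    case True
    show ?thesis
    proof (cases "l0 < d")
      case True2: True
      have "a = pt ?g M (Suc l0)" using True am unfolding pt_def wt_Suc by auto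
      then show ?thesis using a True2 by auto
    next
      case False
      then have "l0 = d" using l0 by simp
      then have e: "mu - 1 = ?g" using True wt_top[of d] unfolding pt_def by auto
      show ?thesis by (subst e, simp add: Gam_plus_top)
    qed
  qed (simp add: basis_vec_def)
  have t3: "Gam_plus j (m - 1) * Gam_minus ?g (mu + 1) * basis_vec (pt ?g M l0) (mu + 1, m - 1) = 0"
  proof (cases "(mu + 1, m - 1) = pt ?g M l0")
    case True
    show ?thesis
    proof (cases l0)
      case (Suc l1)
      have "a = pt ?g M l1" using True am unfolding pt_def Suc wt_Suc by auto
      then show ?thesis using a Suc l0 by auto
    next
      case 0
      then have e: "mu + 1 = - ?g" using True wt_0[of ?g] unfolding pt_def by auto
      show ?thesis by (subst e, simp add: Gam_minus_bot)
    qed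
  qed (simp add: basis_vec_def)
  show ?thesis unfolding am Q_op_eq t1 t2 t3 by simp
qed

lemma Jp_e_supp:
  assumes l0: "l0 < Suc d" and a: "\<forall>l<Suc d. a \<noteq> pt (real d/2) (M+1) l"
  shows "Jp_op (real d/2) j (basis_vec (pt (real d/2) M l0)) a = 0"
proof -
  let ?g = "real d / 2"
  obtain mu m where am: "a = (mu, m)" by (cases a)
  have t1: "Gam_plus ?g (mu - 1) * basis_vec (pt ?g M l0) (mu - 1, m) = 0"
  proof (cases "(mu - 1, m) = pt ?g M l0")
    case True
    show ?thesis
    proof (cases "l0 < d")
      case True2: True
      have "a = pt ?g (M+1) (Suc l0)" using True am unfolding pt_def wt_Suc by auto
      then show ?thesis using a True2 by auto
    next
      case False
      then have "l0 = d" using l0 by simp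
      then have e: "mu - 1 = ?g" using True wt_top[of d] unfolding pt_def by auto
      show ?thesis by (subst e, simp add: Gam_plus_top)
    qed
  qed (simp add: basis_vec_def)
  have t2: "basis_vec (pt ?g M l0) (mu, m - 1) = 0"
  proof (rule ccontr)
    assume "basis_vec (pt ?g M l0) (mu, m - 1) \<noteq> 0"
    then have "(mu, m - 1) = pt ?g M l0" by (auto simp: basis_vec_def split: if_splits)
    then have "a = pt ?g (M+1) l0" using am unfolding pt_def by auto
    then show False using a l0 by auto
  qed
  show ?thesis unfolding am Jp_op_eq using t1 t2 by simp
qed

lemma Q_lin: "Q_op g j (\<lambda>a. \<Sum>i\<in>I. f i a) b = (\<Sum>i\<in>I. Q_op g j (f i) b)"
proof (cases b)
  case (Pair mu m)
  then show ?thesis by (simp add: Q_op_eq sum_distrib_left sum.distrib)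
qed

lemma Q_scal: "Q_op g j (\<lambda>a. c * f a) b = c * Q_op g j f b"
proof (cases b)
  case (Pair mu m)
  then show ?thesis by (simp add: Q_op_eq algebra_simps)
qed

lemma Jp_lin: "Jp_op g j (\<lambda>a. \<Sum>i\<in>I. f i a) b = (\<Sum>i\<in>I. Jp_op g j (f i) b)"
proof (cases b)
  case (Pair mu m)
  then show ?thesis by (simp add: Jp_op_eq sum_distrib_left sum.distrib)
qed

lemma Jp_scal: "Jp_op g j (\<lambda>a. c * f a) b = c * Jp_op g j f b"
proof (cases b)
  case (Pair mu m)
  then show ?thesis by (simp add: Jp_op_eq algebra_simps)
qed

definition PM :: "real \<Rightarrow> real \<Rightarrow> real \<Rightarrow> complex mat" where
  "PM g j M = mat (fdim g) (fdim g) (\<lambda>(k,l). Jp_op g j (basis_vec (pt g M l)) (pt g (M+1) k))"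

lemma QA_ent: "k < fdim g \<Longrightarrow> l < fdim g \<Longrightarrow> Q_mat_VM g j M $$ (k,l) = Q_op g j (basis_vec (pt g M l)) (pt g M k)"
  unfolding Q_mat_VM_def pt_def by simp

lemma PM_ent: "k < fdim g \<Longrightarrow> l < fdim g \<Longrightarrow> PM g j M $$ (k,l) = Jp_op g j (basis_vec (pt g M l)) (pt g (M+1) k)"
  unfolding PM_def by simp

lemma QA_carrier[simp]: "Q_mat_VM g j M \<in> carrier_mat (fdim g) (fdim g)"
  unfolding Q_mat_VM_def by simp
lemma PM_carrier[simp]: "PM g j M \<in> carrier_mat (fdim g) (fdim g)"
  unfolding PM_def by simp

lemma QA_carrier'[simp]: "Q_mat_VM (real d/2) j M \<in> carrier_mat (Suc d) (Suc d)"
  using QA_carrier[of "real d/2"] by simp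
lemma PM_carrier'[simp]: "PM (real d/2) j M \<in> carrier_mat (Suc d) (Suc d)"
  using PM_carrier[of "real d/2"] by simp

lemma mult_ent: "A \<in> carrier_mat n n \<Longrightarrow> B \<in> carrier_mat n n \<Longrightarrow> k < n \<Longrightarrow> l < n \<Longrightarrow>
   (A * B) $$ (k,l) = (\<Sum>i<n. A $$ (k,i) * B $$ (i,l))"
  by (simp add: scalar_prod_def atLeast0LessThan)

lemma comm_mat:
  fixes d :: nat
  defines "g \<equiv> real d / 2"
  shows "Q_mat_VM g j (M+1) * PM g j M = PM g j M * Q_mat_VM g j M"
proof (rule eq_matI)
  fix k l assume k: "k < dim_row (PM g j M * Q_mat_VM g j M)" and l: "l < dim_col (PM g j M * Q_mat_VM g j M)"
  have k': "k < Suc d" and l': "l < Suc d" using k l by (auto simp: g_def PM_def Q_mat_VM_def)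
  let ?e = "\<lambda>N i. basis_vec (pt g N i)"
  have "(Q_mat_VM g j (M+1) * PM g j M) $$ (k,l) = (\<Sum>i<Suc d. Q_op g j (?e (M+1) i) (pt g (M+1) k) * Jp_op g j (?e M l) (pt g (M+1) i))"
    by (subst mult_ent[of _ "Suc d"], auto simp: g_def k' l' QA_ent PM_ent intro!: sum.cong)
  also have "\<dots> = Q_op g j (\<lambda>a. \<Sum>i<Suc d. Jp_op g j (?e M l) (pt g (M+1) i) * ?e (M+1) i a) (pt g (M+1) k)"
    unfolding Q_lin Q_scal by (simp add: mult.commute)
  also have "(\<lambda>a. \<Sum>i<Suc d. Jp_op g j (?e M l) (pt g (M+1) i) * ?e (M+1) i a) = Jp_op g j (?e M l)"
    by (rule expand_fun, unfold g_def, rule Jp_e_supp[OF l'], auto)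
  also have "Q_op g j (Jp_op g j (?e M l)) (pt g (M+1) k) = Jp_op g j (Q_op g j (?e M l)) (pt g (M+1) k)"
    by (rule Q_Jp_comm)
  also have "Q_op g j (?e M l) = (\<lambda>a. \<Sum>i<Suc d. Q_op g j (?e M l) (pt g M i) * ?e M i a)"
    by (rule expand_fun[symmetric], unfold g_def, rule Q_e_supp[OF l'], auto)
  also have "Jp_op g j \<dots> (pt g (M+1) k) = (\<Sum>i<Suc d. Jp_op g j (?e M i) (pt g (M+1) k) * Q_op g j (?e M l) (pt g M i))"
    unfolding Jp_lin Jp_scal by (simp add: mult.commute)
  also have "\<dots> = (PM g j M * Q_mat_VM g j M) $$ (k,l)"
    by (subst mult_ent[of _ "Suc d"], auto simp: g_def k' l' QA_ent PM_ent intro!: sum.cong)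
  finally show "(Q_mat_VM g j (M+1) * PM g j M) $$ (k,l) = (PM g j M * Q_mat_VM g j M) $$ (k,l)" .
qed (auto simp: PM_def Q_mat_VM_def)



lemma bv_eq: "basis_vec p q = (if q = p then 1 else 0)" unfolding basis_vec_def by simp

lemma wt_m1: "wt g k - 1 = wt g l \<longleftrightarrow> k = Suc l" unfolding wt_def by auto
lemma wt_p1: "wt g k + 1 = wt g l \<longleftrightarrow> l = Suc k" unfolding wt_def by auto

lemma L1: "basis_vec (pt g M l) (wt g k - 1, M + 1 - wt g k) = (if k = Suc l then 1 else 0)"
  unfolding basis_vec_def pt_def wt_def by auto
lemma L2: "basis_vec (pt g M l) (wt g k, M + 1 - wt g k - 1) = (if k = l then 1 else 0)"
  unfolding basis_vec_def pt_def wt_def by auto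
lemma L3: "basis_vec (pt g M l) (wt g k, M - wt g k) = (if k = l then 1 else 0)"
  unfolding basis_vec_def pt_def wt_def by auto
lemma L4: "basis_vec (pt g M l) (wt g k - 1, M - wt g k + 1) = (if k = Suc l then 1 else 0)"
  unfolding basis_vec_def pt_def wt_def by auto
lemma L5: "basis_vec (pt g M l) (wt g k + 1, M - wt g k - 1) = (if l = Suc k then 1 else 0)"
  unfolding basis_vec_def pt_def wt_def by auto

lemma dim_PM[simp]: "dim_row (PM g j M) = fdim g" "dim_col (PM g j M) = fdim g"
  unfolding PM_def by auto

lemma PM_explicit:
  assumes "k < Suc d" "l < Suc d"
  shows "PM (real d/2) j M $$ (k,l) = (if k = Suc l then Gam_plus (real d/2) (wt (real d/2) k - 1) else 0)
      + (if k = l then Gam_plus j (M - wt (real d/2) k) else 0)"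
proof -
  have p: "pt (real d/2) (M+1) k = (wt (real d/2) k, M + 1 - wt (real d/2) k)" by (simp add: pt_def)
  show ?thesis using assms unfolding PM_ent[of k "real d/2" l, simplified, OF assms] p Jp_op_eq L1 L2
    by simp
qed

lemma det_PM:
  assumes "\<And>k. k < Suc d \<Longrightarrow> Gam_plus j (M - wt (real d/2) k) \<noteq> 0"
  shows "det (PM (real d/2) j M) \<noteq> 0"
proof -
  have "det (PM (real d/2) j M) = prod_list (diag_mat (PM (real d/2) j M))"
    by (rule det_lower_triangular[of "Suc d"], auto simp: PM_explicit)
  also have "\<dots> \<noteq> 0"
    using assms by (auto simp: diag_mat_def PM_explicit prod_list_zero_iff)
  finally show ?thesis .
qed

lemma Gam_plus_nz:
  assumes "M \<ge> \<bar>j\<bar> + real d + 2" "k < Suc d"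
  shows "Gam_plus j (M - wt (real d/2) k) \<noteq> 0"
proof -
  have "wt (real d/2) k \<le> real d" using assms(2) by (simp add: wt_def)
  then have "j - (M - wt (real d/2) k) \<noteq> 0" "j + (M - wt (real d/2) k) + 1 \<noteq> 0"
    using assms(1) by (auto simp: abs_if split: if_splits)
  then show ?thesis unfolding Gam_plus_def by (simp del: of_real_add of_real_diff)
qed

lemma char_poly_period:
  assumes "M \<ge> \<bar>j\<bar> + real d + 2"
  shows "char_poly (Q_mat_VM (real d/2) j (M+1)) = char_poly (Q_mat_VM (real d/2) j M)"
proof -
  let ?P = "PM (real d/2) j M" and ?A = "Q_mat_VM (real d/2) j M" and ?A' = "Q_mat_VM (real d/2) j (M+1)"
  have "det ?P \<noteq> 0" by (rule det_PM, rule Gam_plus_nz[OF assms])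
  from det_non_zero_imp_unit[OF PM_carrier' this]
  obtain Pi where Pi: "Pi \<in> carrier_mat (Suc d) (Suc d)" "Pi * ?P = 1\<^sub>m (Suc d)" "?P * Pi = 1\<^sub>m (Suc d)"
    unfolding Units_def ring_mat_def by auto
  have "?A' = ?A' * (?P * Pi)" using Pi right_mult_one_mat[OF QA_carrier'] by simp
  also have "\<dots> = (?A' * ?P) * Pi" using assoc_mult_mat[OF QA_carrier' PM_carrier' Pi(1)] by simp
  also have "?A' * ?P = ?P * ?A" using comm_mat[of d j M] by simp
  finally have "?A' = ?P * ?A * Pi" .
  then have "similar_mat ?A' ?A"
    by (intro similar_matI[where n="Suc d" and P="?P" and Q=Pi], insert Pi, auto)
  then show ?thesis by (rule char_poly_similar)
qed

lemma QA_explicit: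
  assumes "k < Suc d" "l < Suc d"
  shows "Q_mat_VM (real d/2) j M $$ (k,l) =
      (if k = l then complex_of_real (DR (real d/2) j (wt (real d/2) k) (M - wt (real d/2) k)) else 0)
    + (if k = Suc l then Gam_plus (real d/2) (wt (real d/2) k - 1) * Gam_minus j (M - wt (real d/2) k + 1) else 0)
    + (if l = Suc k then Gam_plus j (M - wt (real d/2) k - 1) * Gam_minus (real d/2) (wt (real d/2) k + 1) else 0)"
proof -
  have p: "pt (real d/2) M k = (wt (real d/2) k, M - wt (real d/2) k)" by (simp add: pt_def)
  show ?thesis using assms unfolding QA_ent[of k "real d/2" l, simplified, OF assms] p Q_op_eq L3 L4 L5
    by simp
qed

lemma char_poly_cont:
  "char_poly (Q_mat_VM (real d/2) j M) = cont (\<lambda>k. [:- (Q_mat_VM (real d/2) j M $$ (k,k)), 1:])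
      (\<lambda>k. [:Q_mat_VM (real d/2) j M $$ (k, Suc k) * Q_mat_VM (real d/2) j M $$ (Suc k, k):]) (Suc d)"
proof -
  let ?A = "Q_mat_VM (real d/2) j M"
  define f where "f = (\<lambda>(i,l). (if i = l then [:0,1:] else 0) + [:- ?A $$ (i,l):])"
  have "char_poly_matrix ?A = mat (Suc d) (Suc d) f"
    by (rule eq_matI, auto simp: char_poly_matrix_def f_def Q_mat_VM_def)
  then have "char_poly ?A = det (mat (Suc d) (Suc d) f)" unfolding char_poly_def by simp
  also have "\<dots> = cont (\<lambda>k. f (k,k)) (\<lambda>k. f (k, Suc k) * f (Suc k, k)) (Suc d)"
    by (rule det_tridiag, auto simp: f_def QA_explicit)
  also have "\<dots> = cont (\<lambda>k. [:- (?A $$ (k,k)), 1:]) (\<lambda>k. [:?A $$ (k, Suc k) * ?A $$ (Suc k, k):]) (Suc d)"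
    by (rule cont_cong, auto simp: f_def)
  finally show ?thesis .
qed

lemma DR_aaG: "complex_of_real (DR g j w (M - w)) = aaG (of_real g) (of_real j) (of_real M) (of_real w)"
  by (simp add: DR_def aaG_def algebra_simps)
lemma pp_ppG: "(- complex_of_real ((g - w) * (g + w + 1))) * (- complex_of_real ((j - (M - w) + 1) * (j + (M - w))))
   = ppG (of_real g) (of_real j) (of_real M) (of_real w)"
  by (simp add: ppG_def algebra_simps)

lemma poly_char_fC: "poly (char_poly (Q_mat_VM (real d/2) j M)) x = fC d j M x"
proof -
  let ?A = "Q_mat_VM (real d/2) j M"
  let ?g = "real d / 2"
  have "poly (char_poly ?A) x = cont (\<lambda>k. x - ?A $$ (k,k)) (\<lambda>k. ?A $$ (k, Suc k) * ?A $$ (Suc k, k)) (Suc d)"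
    unfolding char_poly_cont poly_cont by simp
  also have "\<dots> = fC d j M x"
    unfolding fC_def
  proof (rule cont_cong)
    fix k assume k: "k < Suc d"
    show "x - ?A $$ (k,k) = x - aaG (complex_of_real ?g) (of_real j) (of_real M) (of_real (wt ?g k))"
      using k by (simp add: QA_explicit DR_aaG)
  next
    fix k assume k: "Suc k < Suc d"
    let ?w = "wt ?g k"
    have e1: "?A $$ (k, Suc k) = Gam_plus j (M - ?w - 1) * Gam_minus ?g (?w + 1)"
      using k by (simp add: QA_explicit)
    have e2: "?A $$ (Suc k, k) = Gam_plus ?g ?w * Gam_minus j (M - ?w)"
      using k by (simp add: QA_explicit wt_Suc)
    have "?A $$ (k, Suc k) * ?A $$ (Suc k, k) = (Gam_plus ?g ?w * Gam_minus ?g (?w + 1)) * (Gam_plus j (M - ?w - 1) * Gam_minus j (M - ?w))"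
      unfolding e1 e2 by (simp add: algebra_simps)
    also have "\<dots> = ppG (complex_of_real ?g) (of_real j) (of_real M) (of_real ?w)"
      unfolding Gpm' Gpm by (rule pp_ppG)
    finally show "?A $$ (k, Suc k) * ?A $$ (Suc k, k) = ppG (complex_of_real ?g) (of_real j) (of_real M) (of_real ?w)" .
  qed
  finally show ?thesis .
qed

theorem char_poly_main:
  "char_poly (Q_mat_VM (real d/2) j M) = (\<Prod>k<Suc d. [:- lamC d j k, 1:])"
proof (rule poly_ext)
  fix x
  have per: "fC d' j' (M'+1) x' = fC d' j' M' x'" if "M' \<ge> \<bar>j'\<bar> + real d' + 2" for d' j' M' x'
    using char_poly_period[OF that] poly_char_fC by metis
  show "poly (char_poly (Q_mat_VM (real d/2) j M)) x = poly (\<Prod>k<Suc d. [:- lamC d j k, 1:]) x"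
  proof -
    have h: "fC d j M x = (\<Prod>k<Suc d. x - lamC d j k)" by (rule fC_prod, rule per)
    show ?thesis unfolding poly_char_fC h by (simp add: poly_prod algebra_simps)
  qed
qed



definition embv :: "real \<Rightarrow> real \<Rightarrow> nat \<Rightarrow> complex vec \<Rightarrow> (real \<times> real \<Rightarrow> complex)" where
  "embv g M n u = (\<lambda>a. \<Sum>l<n. u $ l * basis_vec (pt g M l) a)"

lemma dim_QA[simp]: "dim_row (Q_mat_VM g j M) = fdim g" "dim_col (Q_mat_VM g j M) = fdim g"
  unfolding Q_mat_VM_def by auto

lemma embv_pt: "l < n \<Longrightarrow> embv g M n u (pt g M l) = u $ l"
proof -
  assume l: "l < n"
  have "embv g M n u (pt g M l) = (\<Sum>i<n. if i = l then u $ i else 0)"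
    unfolding embv_def by (rule sum.cong, auto simp: bv_pt)
  then show ?thesis using l by simp
qed

lemma embv_supp: "(\<forall>l<n. a \<noteq> pt g M l) \<Longrightarrow> embv g M n u a = 0"
  unfolding embv_def by (rule sum.neutral, auto simp: basis_vec_def)

lemma embv_inj: "u \<in> carrier_vec n \<Longrightarrow> u' \<in> carrier_vec n \<Longrightarrow> embv g M n u = embv g M n u' \<Longrightarrow> u = u'"
proof -
  assume u: "u \<in> carrier_vec n" and u': "u' \<in> carrier_vec n" and e: "embv g M n u = embv g M n u'"
  show "u = u'"
  proof (rule eq_vecI)
    fix i assume "i < dim_vec u'"
    then have i: "i < n" using u' by simp
    show "u $ i = u' $ i" using embv_pt[OF i, of g M u] embv_pt[OF i, of g M u'] e by simp
  qed (use u u' in simp)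
qed

lemma Q_zero: "Q_op g j (\<lambda>_. 0) = (\<lambda>_. 0)"
proof
  fix b show "Q_op g j (\<lambda>_. 0) b = 0" by (cases b, simp add: Q_op_eq)
qed

lemma Q_basis_expand:
  assumes "l < Suc d"
  shows "Q_op (real d/2) j (basis_vec (pt (real d/2) M l)) =
     (\<lambda>a. \<Sum>i<Suc d. Q_mat_VM (real d/2) j M $$ (i,l) * basis_vec (pt (real d/2) M i) a)"
proof -
  have "(\<lambda>a. \<Sum>i<Suc d. Q_op (real d/2) j (basis_vec (pt (real d/2) M l)) (pt (real d/2) M i) * basis_vec (pt (real d/2) M i) a)
      = Q_op (real d/2) j (basis_vec (pt (real d/2) M l))"
    by (rule expand_fun, rule Q_e_supp[OF assms], auto)
  moreover have "\<And>i. i < Suc d \<Longrightarrow> Q_mat_VM (real d/2) j M $$ (i,l) = Q_op (real d/2) j (basis_vec (pt (real d/2) M l)) (pt (real d/2) M i)"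
    using QA_ent[of _ "real d/2" l j M] assms by simp
  ultimately show ?thesis by simp
qed

lemma Q_embv:
  assumes u: "u \<in> carrier_vec (Suc d)"
  shows "Q_op (real d/2) j (embv (real d/2) M (Suc d) u) = embv (real d/2) M (Suc d) (Q_mat_VM (real d/2) j M *\<^sub>v u)"
proof
  fix b
  let ?A = "Q_mat_VM (real d/2) j M"
  let ?e = "\<lambda>i. basis_vec (pt (real d/2) M i)"
  have "Q_op (real d/2) j (embv (real d/2) M (Suc d) u) b = (\<Sum>l<Suc d. u $ l * Q_op (real d/2) j (?e l) b)"
    unfolding embv_def Q_lin Q_scal by simp
  also have "\<dots> = (\<Sum>l<Suc d. u $ l * (\<Sum>i<Suc d. ?A $$ (i,l) * ?e i b))"
    by (rule sum.cong, simp, subst Q_basis_expand, auto)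
  also have "\<dots> = (\<Sum>l<Suc d. \<Sum>i<Suc d. ?A $$ (i,l) * u $ l * ?e i b)"
    unfolding sum_distrib_left by (rule sum.cong[OF refl], rule sum.cong[OF refl], simp add: mult_ac)
  also have "\<dots> = (\<Sum>i<Suc d. \<Sum>l<Suc d. ?A $$ (i,l) * u $ l * ?e i b)"
    by (rule sum.swap)
  also have "\<dots> = (\<Sum>i<Suc d. (\<Sum>l<Suc d. ?A $$ (i,l) * u $ l) * ?e i b)"
    unfolding sum_distrib_right by (rule refl)
  also have "\<dots> = embv (real d/2) M (Suc d) (?A *\<^sub>v u) b"
    unfolding embv_def using u
    by (intro sum.cong, auto simp: scalar_prod_def atLeast0LessThan)
  finally show "Q_op (real d/2) j (embv (real d/2) M (Suc d) u) b = embv (real d/2) M (Suc d) (?A *\<^sub>v u) b" .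
qed

lemma embv_smult: "u \<in> carrier_vec n \<Longrightarrow> embv g M n (c \<cdot>\<^sub>v u) = (\<lambda>a. c * embv g M n u a)"
  unfolding embv_def by (auto simp: sum_distrib_left algebra_simps intro!: sum.cong)

lemma embv_mult:
  assumes U: "U \<in> carrier_mat n n" and y: "y \<in> carrier_vec n"
  shows "embv g M n (U *\<^sub>v y) a = (\<Sum>k<n. y $ k * embv g M n (col U k) a)"
proof -
  have "embv g M n (U *\<^sub>v y) a = (\<Sum>l<n. (\<Sum>k<n. U $$ (l,k) * y $ k) * basis_vec (pt g M l) a)"
    unfolding embv_def using U y by (intro sum.cong, auto simp: scalar_prod_def atLeast0LessThan)
  also have "\<dots> = (\<Sum>l<n. \<Sum>k<n. y $ k * (U $$ (l,k) * basis_vec (pt g M l) a))"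
    unfolding sum_distrib_right by (rule sum.cong[OF refl], rule sum.cong[OF refl], simp add: mult_ac)
  also have "\<dots> = (\<Sum>k<n. \<Sum>l<n. y $ k * (U $$ (l,k) * basis_vec (pt g M l) a))"
    by (rule sum.swap)
  also have "\<dots> = (\<Sum>k<n. y $ k * (\<Sum>l<n. U $$ (l,k) * basis_vec (pt g M l) a))"
    by (simp add: sum_distrib_left)
  also have "\<dots> = (\<Sum>k<n. y $ k * embv g M n (col U k) a)"
    unfolding embv_def using U by (intro sum.cong, auto)
  finally show ?thesis .
qed

lemma eig_indep:
  fixes r :: nat and lam :: "nat \<Rightarrow> complex" and c :: "nat \<Rightarrow> complex"
  assumes eig: "\<forall>k<r. Q_op g j (w k) = (\<lambda>a. lam k * w k a)"
    and nz: "\<forall>k<r. \<exists>a. w k a \<noteq> 0"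
    and inj: "inj_on lam {..<r}"
    and sum0: "\<forall>a. (\<Sum>k<r. c k * w k a) = 0"
  shows "\<forall>k<r. c k = 0"
  using assms
proof (induction r arbitrary: c)
  case 0 then show ?case by simp
next
  case (Suc r)
  have f0: "(\<lambda>a. \<Sum>k<Suc r. c k * w k a) = (\<lambda>_. 0)" using Suc.prems(4) by auto
  have Qs: "(\<Sum>k<Suc r. c k * lam k * w k b) = 0" for b
  proof -
    have "Q_op g j (\<lambda>a. \<Sum>k<Suc r. c k * w k a) b = (\<Sum>k<Suc r. c k * Q_op g j (w k) b)"
      unfolding Q_lin Q_scal by simp
    also have "\<dots> = (\<Sum>k<Suc r. c k * lam k * w k b)"
      by (rule sum.cong, simp, subst Suc.prems(1)[rule_format], auto)
    finally show ?thesis unfolding f0 Q_zero by simp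
  qed
  have c'0: "\<forall>a. (\<Sum>k<r. (c k * (lam k - lam r)) * w k a) = 0"
  proof
    fix a
    have "(\<Sum>k<r. (c k * (lam k - lam r)) * w k a) = (\<Sum>k<Suc r. (c k * (lam k - lam r)) * w k a)" by simp
    also have "\<dots> = (\<Sum>k<Suc r. c k * lam k * w k a) - lam r * (\<Sum>k<Suc r. c k * w k a)"
      by (simp add: sum_distrib_left sum_subtractf[symmetric] algebra_simps)
    also have "\<dots> = 0" using Qs[of a] Suc.prems(4)[rule_format, of a] by simp
    finally show "(\<Sum>k<r. (c k * (lam k - lam r)) * w k a) = 0" .
  qed
  have inj': "inj_on lam {..<r}" using Suc.prems(3) by (rule inj_on_subset, auto)
  have IH: "\<forall>k<r. c k * (lam k - lam r) = 0"
    by (rule Suc.IH, use Suc.prems inj' c'0 in auto)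
  have small: "\<forall>k<r. c k = 0"
  proof (intro allI impI)
    fix k assume k: "k < r"
    have "lam k \<noteq> lam r" using Suc.prems(3) k by (auto simp: inj_on_def)
    then show "c k = 0" using IH k by auto
  qed
  obtain a where a: "w r a \<noteq> 0" using Suc.prems(2) by auto
  have "(\<Sum>k<Suc r. c k * w k a) = c r * w r a" using small by simp
  then have "c r = 0" using Suc.prems(4)[rule_format, of a] a by simp
  with small show ?case by (auto simp: less_Suc_eq)
qed



lemma pt_in_index:
  assumes M: "M - e - real d/2 \<in> \<int>" and l: "l < Suc d"
  shows "pt (real d/2) M l \<in> tens_index (real d/2) e"
proof -
  obtain z where z: "M - e - real d/2 = of_int z" using M Ints_cases by blast
  have "M - wt (real d/2) l - e = of_int (z + int d - int l)"
    using z by (simp add: wt_def algebra_simps)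
  then have "M - wt (real d/2) l - e \<in> \<int>" by simp
  moreover have "real l \<le> 2 * (real d/2)" using l by simp
  ultimately show ?thesis unfolding tens_index_def pt_def wt_def by auto
qed

lemma supp_in_S:
  assumes M: "M - e - real d/2 \<in> \<int>"
    and f: "\<And>a. (\<forall>l<Suc d. a \<noteq> pt (real d/2) M l) \<Longrightarrow> f a = 0"
  shows "f \<in> tens_space (real d/2) e"
proof -
  have sub: "{a. f a \<noteq> 0} \<subseteq> pt (real d/2) M ` {..<Suc d}" using f by blast
  then have "finite {a. f a \<noteq> 0}" by (rule finite_subset, simp)
  moreover have "{a. f a \<noteq> 0} \<subseteq> tens_index (real d/2) e"
    using sub pt_in_index[OF M] by blast
  ultimately show ?thesis unfolding tens_space_def by simp
qed

lemma index_to_pt: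
  assumes a: "a \<in> tens_index (real d/2) e"
  shows "\<exists>l<Suc d. a = pt (real d/2) (fst a + snd a) l" and "fst a + snd a - e - real d/2 \<in> \<int>"
proof -
  obtain mu m where am: "a = (mu, m)" by (cases a)
  from a obtain k :: nat where k: "real k \<le> 2 * (real d/2)" "mu = - (real d/2) + real k" and me: "m - e \<in> \<int>"
    unfolding tens_index_def am by auto
  have kd: "k < Suc d" using k(1) by simp
  have "a = pt (real d/2) (fst a + snd a) k" unfolding am pt_def wt_def using k by simp
  then show "\<exists>l<Suc d. a = pt (real d/2) (fst a + snd a) l" using kd by blast
  have eq: "fst a + snd a - e - real d/2 = (m - e) + of_int (int k - int d)"
    using k by (simp add: am algebra_simps)
  show "fst a + snd a - e - real d/2 \<in> \<int>" unfolding eq by (rule Ints_add[OF me], simp)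
qed

lemma decomp_M:
  fixes d :: nat and j M e :: real
  defines "g \<equiv> real d / 2"
  assumes M: "M - e - g \<in> \<int>"
    and inj: "inj_on (lamC d j) {..<Suc d}"
    and f: "\<And>a. (\<forall>l<Suc d. a \<noteq> pt g M l) \<Longrightarrow> f a = 0"
  shows "\<exists>W. (\<forall>k<Suc d. W k \<in> tens_space g e \<and> (\<exists>c. Q_op g j (W k) = (\<lambda>a. c * W k a)))
           \<and> f = (\<lambda>a. \<Sum>k<Suc d. W k a)"
proof -
  let ?A = "Q_mat_VM g j M"
  let ?n = "Suc d"
  have Acar: "?A \<in> carrier_mat ?n ?n" unfolding g_def by simp
  have ev: "eigenvalue ?A (lamC d j k)" if k: "k < ?n" for k
  proof -
    have "poly (char_poly ?A) (lamC d j k) = (\<Prod>i<Suc d. lamC d j k - lamC d j i)"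
      unfolding g_def char_poly_main by (simp add: poly_prod del: prod.lessThan_Suc)
    also have "\<dots> = 0" using k by (intro prod_zero, auto)
    finally show ?thesis using eigenvalue_root_char_poly[OF Acar] by simp
  qed
  then have "\<forall>k. \<exists>u. k < ?n \<longrightarrow> eigenvector ?A u (lamC d j k)" unfolding eigenvalue_def by blast
  then obtain u where u: "\<And>k. k < ?n \<Longrightarrow> eigenvector ?A (u k) (lamC d j k)" by metis
  have ucar: "u k \<in> carrier_vec ?n" and unz: "u k \<noteq> 0\<^sub>v ?n" and uev: "?A *\<^sub>v u k = lamC d j k \<cdot>\<^sub>v u k"
    if "k < ?n" for k using u[OF that] unfolding eigenvector_def by (auto simp: g_def)
  define U where "U = mat ?n ?n (\<lambda>(l,k). u k $ l)"
  have Ucar: "U \<in> carrier_mat ?n ?n" unfolding U_def by simp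
  have colU: "col U k = u k" if "k < ?n" for k
    using that ucar[OF that] unfolding U_def by (intro eq_vecI, auto)
  let ?w = "\<lambda>k. embv g M ?n (u k)"
  have weig: "Q_op g j (?w k) = (\<lambda>a. lamC d j k * ?w k a)" if "k < ?n" for k
    unfolding g_def Q_embv[OF ucar[OF that, unfolded g_def]]
    using uev[OF that] embv_smult[OF ucar[OF that]] by (simp add: g_def)
  have wnz: "\<exists>a. ?w k a \<noteq> 0" if k: "k < ?n" for k
  proof -
    from unz[OF k] ucar[OF k] obtain l where l: "l < ?n" "u k $ l \<noteq> 0"
      by (metis carrier_vecD eq_vecI index_zero_vec(1) index_zero_vec(2))
    then show ?thesis using embv_pt[OF l(1), of g M "u k"] by metis
  qed
  have detU: "det U \<noteq> 0"
  proof
    assume "det U = 0"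
    then obtain c where c: "c \<in> carrier_vec ?n" "c \<noteq> 0\<^sub>v ?n" "U *\<^sub>v c = 0\<^sub>v ?n"
      using det_0_iff_vec_prod_zero[OF Ucar] by blast
    have s0: "\<forall>a. (\<Sum>k<?n. c $ k * ?w k a) = 0"
    proof
      fix a
      have "(\<Sum>k<?n. c $ k * ?w k a) = embv g M ?n (U *\<^sub>v c) a"
        using embv_mult[OF Ucar c(1)] colU by simp
      also have "\<dots> = 0" unfolding c(3) embv_def by simp
      finally show "(\<Sum>k<?n. c $ k * ?w k a) = 0" .
    qed
    have "\<forall>k<?n. c $ k = 0"
      by (rule eig_indep[of _ g j ?w "lamC d j"], use weig wnz inj s0 in auto)
    then have "c = 0\<^sub>v ?n" using c(1) by (intro eq_vecI, auto)
    with c(2) show False by simp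
  qed
  from det_non_zero_imp_unit[OF Ucar detU]
  obtain Ui where Ui: "Ui \<in> carrier_mat ?n ?n" "U * Ui = 1\<^sub>m ?n"
    unfolding Units_def ring_mat_def by auto
  define x where "x = vec ?n (\<lambda>l. f (pt g M l))"
  have xcar: "x \<in> carrier_vec ?n" unfolding x_def by simp
  define y where "y = Ui *\<^sub>v x"
  have ycar: "y \<in> carrier_vec ?n" unfolding y_def by (rule mult_mat_vec_carrier[OF Ui(1) xcar])
  have xy: "U *\<^sub>v y = x" unfolding y_def
    using assoc_mult_mat_vec[OF Ucar Ui(1) xcar] Ui(2) xcar by simp
  have fx: "f = embv g M ?n x"
  proof -
    have "(\<lambda>a. \<Sum>l<?n. f (pt g M l) * basis_vec (pt g M l) a) = f"
      by (rule expand_fun, rule f, auto)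
    then show ?thesis unfolding embv_def x_def by simp
  qed
  define W where "W = (\<lambda>k a. y $ k * ?w k a)"
  have "f = (\<lambda>a. \<Sum>k<?n. W k a)"
  proof
    fix a
    have "f a = embv g M ?n (U *\<^sub>v y) a" unfolding xy fx ..
    also have "\<dots> = (\<Sum>k<?n. W k a)" unfolding embv_mult[OF Ucar ycar] W_def
      by (rule sum.cong, auto simp: colU)
    finally show "f a = (\<Sum>k<?n. W k a)" .
  qed
  moreover have "W k \<in> tens_space g e" if k: "k < ?n" for k
    unfolding g_def by (rule supp_in_S, use M in \<open>simp add: g_def\<close>, auto simp: W_def embv_supp g_def)
  moreover have "\<exists>c. Q_op g j (W k) = (\<lambda>a. c * W k a)" if k: "k < ?n" for k
  proof -
    have "Q_op g j (W k) = (\<lambda>b. y $ k * Q_op g j (?w k) b)"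
      unfolding W_def by (rule ext, rule Q_scal)
    also have "\<dots> = (\<lambda>a. lamC d j k * W k a)" unfolding weig[OF k] W_def by (simp add: mult_ac)
    finally show ?thesis by blast
  qed
  ultimately show ?thesis by blast
qed



lemma sum_R:
  fixes v :: "real \<times> real \<Rightarrow> complex"
  assumes "finite Ms" "v a \<noteq> 0 \<Longrightarrow> fst a + snd a \<in> Ms"
  shows "(\<Sum>M\<in>Ms. if fst a + snd a = M then v a else 0) = v a"
proof (cases "v a = 0")
  case True
  have "(\<Sum>M\<in>Ms. if fst a + snd a = M then v a else 0) = (\<Sum>M\<in>Ms. 0)"
    by (rule sum.cong, auto simp: True)
  then show ?thesis using True by simp
next
  case False
  then show ?thesis using assms by (simp add: sum.delta)
qed

lemma diag_if_inj:
  fixes d :: nat and j e :: real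
  assumes inj: "inj_on (lamC d j) {..<Suc d}"
  shows "diagonalisable_on (tens_space (real d/2) e) (Q_op (real d/2) j)"
  unfolding diagonalisable_on_def
proof
  let ?g = "real d / 2"
  let ?S = "tens_space ?g e"
  fix v assume v: "v \<in> ?S"
  define supp where "supp = {a. v a \<noteq> 0}"
  have fs: "finite supp" and ss: "supp \<subseteq> tens_index ?g e" using v unfolding tens_space_def supp_def by auto
  define Ms where "Ms = (\<lambda>a. fst a + snd a) ` supp"
  have fMs: "finite Ms" unfolding Ms_def using fs by simp
  define R where "R = (\<lambda>M a. if fst a + snd a = M then v a else (0::complex))"
  have "\<forall>M\<in>Ms. \<exists>W. (\<forall>k<Suc d. W k \<in> ?S \<and> (\<exists>c. Q_op ?g j (W k) = (\<lambda>a. c * W k a)))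
           \<and> R M = (\<lambda>a. \<Sum>k<Suc d. W k a)"
  proof
    fix M assume M: "M \<in> Ms"
    then obtain a0 where a0: "a0 \<in> supp" "M = fst a0 + snd a0" unfolding Ms_def by auto
    have Mint: "M - e - ?g \<in> \<int>" using index_to_pt(2)[of a0 d e] a0 ss by auto
    show "\<exists>W. (\<forall>k<Suc d. W k \<in> ?S \<and> (\<exists>c. Q_op ?g j (W k) = (\<lambda>a. c * W k a)))
           \<and> R M = (\<lambda>a. \<Sum>k<Suc d. W k a)"
    proof (rule decomp_M[OF Mint inj])
      fix a assume na: "\<forall>l<Suc d. a \<noteq> pt ?g M l"
      show "R M a = 0"
      proof (rule ccontr)
        assume "R M a \<noteq> 0"
        then have "fst a + snd a = M" "a \<in> supp" unfolding R_def supp_def by (auto split: if_splits)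
        then show False using index_to_pt(1)[of a d e] ss na by auto
      qed
    qed
  qed
  then obtain Wf where Wf: "\<And>M. M \<in> Ms \<Longrightarrow> (\<forall>k<Suc d. Wf M k \<in> ?S \<and> (\<exists>c. Q_op ?g j (Wf M k) = (\<lambda>a. c * Wf M k a)))
           \<and> R M = (\<lambda>a. \<Sum>k<Suc d. Wf M k a)"
    by metis
  define L where "L = List.product (sorted_list_of_set Ms) [0..<Suc d]"
  have setL: "set L = Ms \<times> {0..<Suc d}" unfolding L_def using fMs by (simp del: upt_Suc)
  have dL: "distinct L" unfolding L_def by (simp add: distinct_product)
  define ws where "ws = map (\<lambda>(M,k). Wf M k) L"
  show "\<exists>ws. (\<forall>w\<in>set ws. w \<in> ?S \<and> (\<exists>c. Q_op ?g j w = (\<lambda>a. c * w a))) \<and> v = (\<lambda>a. \<Sum>w\<leftarrow>ws. w a)"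
  proof (intro exI conjI)
    show "\<forall>w\<in>set ws. w \<in> ?S \<and> (\<exists>c. Q_op ?g j w = (\<lambda>a. c * w a))"
    proof
      fix w assume "w \<in> set ws"
      then obtain M k where Mk: "(M,k) \<in> set L" "w = Wf M k" unfolding ws_def by auto
      then have "M \<in> Ms" "k < Suc d" using setL by auto
      then show "w \<in> ?S \<and> (\<exists>c. Q_op ?g j w = (\<lambda>a. c * w a))" using Wf[of M] Mk(2) by blast
    qed
    show "v = (\<lambda>a. \<Sum>w\<leftarrow>ws. w a)"
    proof
      fix a
      have "(\<Sum>w\<leftarrow>ws. w a) = (\<Sum>p\<leftarrow>L. (\<lambda>(M,k). Wf M k a) p)"
        unfolding ws_def by (simp add: o_def case_prod_beta)
      also have "\<dots> = (\<Sum>p\<in>Ms \<times> {0..<Suc d}. (\<lambda>(M,k). Wf M k a) p)"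
        using sum_list_distinct_conv_sum_set[OF dL] setL by simp
      also have "\<dots> = (\<Sum>M\<in>Ms. \<Sum>k\<in>{0..<Suc d}. Wf M k a)"
        by (rule sum.cartesian_product[symmetric])
      also have "\<dots> = (\<Sum>M\<in>Ms. R M a)"
      proof (rule sum.cong[OF refl])
        fix M assume "M \<in> Ms"
        then have "R M a = (\<Sum>k<Suc d. Wf M k a)" using Wf[of M] by metis
        then show "(\<Sum>k\<in>{0..<Suc d}. Wf M k a) = R M a" by (simp add: atLeast0LessThan)
      qed
      also have "\<dots> = v a"
        unfolding R_def by (rule sum_R[OF fMs], auto simp: Ms_def supp_def)
      finally show "v a = (\<Sum>w\<leftarrow>ws. w a)" by simp
    qed
  qed
qed



definition RM :: "real \<Rightarrow> (real \<times> real \<Rightarrow> complex) \<Rightarrow> (real \<times> real \<Rightarrow> complex)" where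
  "RM M f = (\<lambda>a. if fst a + snd a = M then f a else 0)"

lemma Q_RM: "Q_op g j (RM M f) = RM M (Q_op g j f)"
proof
  fix b show "Q_op g j (RM M f) b = RM M (Q_op g j f) b"
    by (cases b, simp add: Q_op_eq RM_def)
qed

fun HQ :: "real \<Rightarrow> real \<Rightarrow> complex list \<Rightarrow> (real \<times> real \<Rightarrow> complex) \<Rightarrow> (real \<times> real \<Rightarrow> complex)" where
  "HQ g j [] f = f"
| "HQ g j (c # cs) f = (\<lambda>a. Q_op g j (HQ g j cs f) a - c * HQ g j cs f a)"

lemma HQ_sum: "HQ g j cs (\<lambda>a. \<Sum>i\<in>I. f i a) = (\<lambda>a. \<Sum>i\<in>I. HQ g j cs (f i) a)"
proof (induction cs)
  case Nil then show ?case by simp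
next
  case (Cons c cs)
  show ?case by (simp add: Cons Q_lin sum_subtractf sum_distrib_left)
qed

lemma HQ_eig: "Q_op g j f = (\<lambda>a. c * f a) \<Longrightarrow> HQ g j cs f = (\<lambda>a. (\<Prod>x\<leftarrow>cs. c - x) * f a)"
proof (induction cs)
  case Nil then show ?case by simp
next
  case (Cons x cs)
  show ?case
  proof
    fix a
    have "HQ g j (x # cs) f a = Q_op g j (\<lambda>a. (\<Prod>x\<leftarrow>cs. c - x) * f a) a - x * ((\<Prod>x\<leftarrow>cs. c - x) * f a)"
      using Cons by simp
    also have "\<dots> = (\<Prod>x\<leftarrow>cs. c - x) * (c * f a) - x * ((\<Prod>x\<leftarrow>cs. c - x) * f a)"
      unfolding Q_scal Cons.prems by simp
    also have "\<dots> = (\<Prod>x\<leftarrow>x # cs. c - x) * f a" by (simp add: algebra_simps)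
    finally show "HQ g j (x # cs) f a = (\<Prod>x\<leftarrow>x # cs. c - x) * f a" .
  qed
qed

lemma pt_shift1: "(mu - 1, m + 1) = pt g M l \<Longrightarrow> (mu, m) = pt g M (Suc l)"
  unfolding pt_def wt_Suc by auto
lemma pt_shift2: "(mu + 1, m - 1) = pt g M (Suc l) \<Longrightarrow> (mu, m) = pt g M l"
  unfolding pt_def wt_Suc by auto
lemma pt_shift3: "(mu + 1, m - 1) = pt g M 0 \<Longrightarrow> mu + 1 = - g"
  unfolding pt_def wt_0 by auto

lemma kill_step:
  fixes d :: nat
  defines "g \<equiv> real d / 2"
  assumes r: "r < d"
    and van: "\<And>a. (\<forall>l\<le>r. a \<noteq> pt g M l) \<Longrightarrow> f a = 0"
    and nz: "f (pt g M r) \<noteq> 0"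
    and G1: "Gam_plus g (wt g r) \<noteq> 0" and G2: "Gam_minus j (M - wt g r) \<noteq> 0"
  shows "(\<forall>a. (\<forall>l\<le>Suc r. a \<noteq> pt g M l) \<longrightarrow> Q_op g j f a - c * f a = 0)
       \<and> Q_op g j f (pt g M (Suc r)) - c * f (pt g M (Suc r)) \<noteq> 0"
proof
  show "\<forall>a. (\<forall>l\<le>Suc r. a \<noteq> pt g M l) \<longrightarrow> Q_op g j f a - c * f a = 0"
  proof (intro allI impI)
    fix a assume na: "\<forall>l\<le>Suc r. a \<noteq> pt g M l"
    obtain mu m where am: "a = (mu, m)" by (cases a)
    have f0: "f (mu, m) = 0" using van na am by auto
    have f1: "f (mu - 1, m + 1) = 0"
    proof (rule van, intro allI impI)
      fix l assume "l \<le> r"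
      show "(mu - 1, m + 1) \<noteq> pt g M l"
      proof
        assume "(mu - 1, m + 1) = pt g M l"
        then have "a = pt g M (Suc l)" using pt_shift1 am by blast
        then show False using na \<open>l \<le> r\<close> by auto
      qed
    qed
    have f2: "Gam_plus j (m - 1) * Gam_minus g (mu + 1) * f (mu + 1, m - 1) = 0"
    proof (cases "\<exists>l\<le>r. (mu + 1, m - 1) = pt g M l")
      case True
      then obtain l where l: "l \<le> r" "(mu + 1, m - 1) = pt g M l" by auto
      show ?thesis
      proof (cases l)
        case 0
        then have e: "mu + 1 = - g" using pt_shift3 l by blast
        show ?thesis by (subst e, simp add: Gam_minus_bot)
      next
        case (Suc l')
        then have "a = pt g M l'" using pt_shift2 l am by blast
        then show ?thesis using na l Suc by auto
      qed
    next
      case False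
      then have "f (mu + 1, m - 1) = 0" using van by auto
      then show ?thesis by simp
    qed
    show "Q_op g j f a - c * f a = 0" unfolding am Q_op_eq f0 f1 f2 by simp
  qed
  let ?w = "wt g (Suc r)"
  have p: "pt g M (Suc r) = (?w, M - ?w)" by (simp add: pt_def)
  have a1: "f (?w, M - ?w) = 0" unfolding p[symmetric] by (rule van, auto)
  have a2: "(?w - 1, M - ?w + 1) = pt g M r" unfolding pt_def wt_Suc by simp
  have a3: "f (?w + 1, M - ?w - 1) = 0"
  proof (rule van, intro allI impI)
    fix l assume "l \<le> r"
    have "(?w + 1, M - ?w - 1) = pt g M (Suc (Suc r))" unfolding pt_def wt_Suc by simp
    then show "(?w + 1, M - ?w - 1) \<noteq> pt g M l" using \<open>l \<le> r\<close> by auto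
  qed
  have "Q_op g j f (pt g M (Suc r)) - c * f (pt g M (Suc r)) =
      Gam_plus g (?w - 1) * Gam_minus j (M - ?w + 1) * f (pt g M r)"
    unfolding p Q_op_eq a1 a3 a2[symmetric] by simp
  also have "Gam_plus g (?w - 1) * Gam_minus j (M - ?w + 1) = Gam_plus g (wt g r) * Gam_minus j (M - wt g r)"
    unfolding wt_Suc by simp
  finally show "Q_op g j f (pt g M (Suc r)) - c * f (pt g M (Suc r)) \<noteq> 0"
    using G1 G2 nz by simp
qed



lemma kill:
  fixes d :: nat
  defines "g \<equiv> real d / 2"
  assumes len: "length cs \<le> d"
    and Gnz: "\<And>r. r < d \<Longrightarrow> Gam_plus g (wt g r) \<noteq> 0 \<and> Gam_minus j (M - wt g r) \<noteq> 0"
  shows "(\<forall>a. (\<forall>l\<le>length cs. a \<noteq> pt g M l) \<longrightarrow> HQ g j cs (basis_vec (pt g M 0)) a = 0)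
       \<and> HQ g j cs (basis_vec (pt g M 0)) (pt g M (length cs)) \<noteq> 0"
  using len
proof (induction cs)
  case Nil
  show ?case by (auto simp: basis_vec_def)
next
  case (Cons c cs)
  then have r: "length cs < d" by simp
  from Cons.IH r have IH: "\<forall>a. (\<forall>l\<le>length cs. a \<noteq> pt g M l) \<longrightarrow> HQ g j cs (basis_vec (pt g M 0)) a = 0"
    "HQ g j cs (basis_vec (pt g M 0)) (pt g M (length cs)) \<noteq> 0" by auto
  have "(\<forall>a. (\<forall>l\<le>Suc (length cs). a \<noteq> pt g M l) \<longrightarrow> Q_op g j (HQ g j cs (basis_vec (pt g M 0))) a - c * HQ g j cs (basis_vec (pt g M 0)) a = 0)
       \<and> Q_op g j (HQ g j cs (basis_vec (pt g M 0))) (pt g M (Suc (length cs))) - c * HQ g j cs (basis_vec (pt g M 0)) (pt g M (Suc (length cs))) \<noteq> 0"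
    unfolding g_def
    by (rule kill_step[OF r], use IH Gnz[OF r] in \<open>auto simp: g_def\<close>)
  then show ?case by simp
qed

lemma Gam_nz_kill:
  fixes d :: nat
  assumes j2: "2 * j \<in> \<int>" and je: "j - e \<notin> \<int>" and r: "r < d"
  shows "Gam_plus (real d/2) (wt (real d/2) r) \<noteq> 0 \<and> Gam_minus j ((e + real d/2) - wt (real d/2) r) \<noteq> 0"
proof
  have "real d / 2 - wt (real d/2) r \<noteq> 0" "real d / 2 + wt (real d/2) r + 1 \<noteq> 0"
    using r by (auto simp: wt_def)
  then show "Gam_plus (real d/2) (wt (real d/2) r) \<noteq> 0" unfolding Gam_plus_def by (simp del: of_real_add of_real_diff)
  define m where "m = (e + real d/2) - wt (real d/2) r"
  have me: "m = e + of_int (int d - int r)" unfolding m_def wt_def by simp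
  have jm: "j - m \<notin> \<int>"
  proof
    assume "j - m \<in> \<int>"
    then have "(j - m) + of_int (int d - int r) \<in> \<int>" by simp
    then show False using je me by simp
  qed
  have "j - m + 1 \<noteq> 0"
  proof
    assume "j - m + 1 = 0" then have "j - m = -1" by simp
    then show False using jm by simp
  qed
  moreover have "j + m \<noteq> 0"
  proof
    assume "j + m = 0" then have "j - m = 2 * j" by simp
    then show False using jm j2 by metis
  qed
  ultimately show "Gam_minus j ((e + real d/2) - wt (real d/2) r) \<noteq> 0"
    unfolding Gam_minus_def m_def[symmetric] by (simp del: of_real_add of_real_diff)
qed

lemma nondiag:
  fixes d :: nat and j e :: real
  assumes j2: "2 * j \<in> \<int>" and je: "j - e \<notin> \<int>" and ninj: "\<not> inj_on (lamC d j) {..<Suc d}"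
  shows "\<not> diagonalisable_on (tens_space (real d/2) e) (Q_op (real d/2) j)"
proof
  let ?g = "real d / 2"
  let ?S = "tens_space ?g e"
  define M where "M = e + ?g"
  have Mint: "M - e - ?g \<in> \<int>" unfolding M_def by simp
  define e0 where "e0 = basis_vec (pt ?g M 0)"
  have e0S: "e0 \<in> ?S" unfolding e0_def
    by (rule supp_in_S[OF Mint], auto simp: basis_vec_def)
  assume "diagonalisable_on ?S (Q_op ?g j)"
  then obtain ws where ws: "\<forall>w\<in>set ws. w \<in> ?S \<and> (\<exists>c. Q_op ?g j w = (\<lambda>a. c * w a))"
    and e0ws: "e0 = (\<lambda>a. \<Sum>w\<leftarrow>ws. w a)"
    unfolding diagonalisable_on_def using e0S by blast
  define cs where "cs = remdups (map (lamC d j) [0..<Suc d])"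
  have lencs: "length cs \<le> d"
  proof -
    have "remdups (map (lamC d j) [0..<Suc d]) \<noteq> map (lamC d j) [0..<Suc d]"
      using ninj by (metis distinct_map distinct_remdups distinct_upt set_upt atLeast0LessThan)
    then have "length cs \<noteq> Suc d" unfolding cs_def using length_remdups_eq[of "map (lamC d j) [0..<Suc d]"] by simp
    moreover have "length cs \<le> Suc d" unfolding cs_def using length_remdups_leq[of "map (lamC d j) [0..<Suc d]"] by simp
    ultimately show ?thesis by simp
  qed
  let ?A = "Q_mat_VM ?g j M"
  have zero: "HQ ?g j cs (RM M w) = (\<lambda>_. 0)" if w: "w \<in> set ws" for w
  proof -
    obtain c where c: "Q_op ?g j w = (\<lambda>a. c * w a)" and wS: "w \<in> ?S" using ws w by blast
    have Rc: "Q_op ?g j (RM M w) = (\<lambda>a. c * RM M w a)" unfolding Q_RM unfolding c RM_def by auto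
    have eq: "HQ ?g j cs (RM M w) = (\<lambda>a. (\<Prod>x\<leftarrow>cs. c - x) * RM M w a)" by (rule HQ_eig[OF Rc])
    show ?thesis
    proof (cases "RM M w = (\<lambda>_. 0)")
      case True then show ?thesis unfolding eq by simp
    next
      case False
      define x where "x = vec (Suc d) (\<lambda>l. RM M w (pt ?g M l))"
      have xcar: "x \<in> carrier_vec (Suc d)" unfolding x_def by simp
      have supp: "\<And>a. (\<forall>l<Suc d. a \<noteq> pt ?g M l) \<Longrightarrow> RM M w a = 0"
      proof -
        fix a assume na: "\<forall>l<Suc d. a \<noteq> pt ?g M l"
        show "RM M w a = 0"
        proof (rule ccontr)
          assume "RM M w a \<noteq> 0"
          then have "fst a + snd a = M" "w a \<noteq> 0" unfolding RM_def by (auto split: if_splits)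
          moreover have "{a. w a \<noteq> 0} \<subseteq> tens_index ?g e" using wS unfolding tens_space_def by auto
          ultimately show False using index_to_pt(1)[of a d e] na by auto
        qed
      qed
      have Rx: "RM M w = embv ?g M (Suc d) x"
      proof -
        have "(\<lambda>a. \<Sum>l<Suc d. RM M w (pt ?g M l) * basis_vec (pt ?g M l) a) = RM M w"
          by (rule expand_fun, rule supp, auto)
        then show ?thesis unfolding embv_def x_def by simp
      qed
      have "embv ?g M (Suc d) (?A *\<^sub>v x) = embv ?g M (Suc d) (c \<cdot>\<^sub>v x)"
        unfolding Q_embv[OF xcar, symmetric] Rx[symmetric] Rc embv_smult[OF xcar] ..
      then have Ax: "?A *\<^sub>v x = c \<cdot>\<^sub>v x"
        by (rule embv_inj[rotated 2], use xcar mult_mat_vec_carrier[OF QA_carrier'[of d j M] xcar] in auto)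
      have xnz: "x \<noteq> 0\<^sub>v (Suc d)"
      proof
        assume "x = 0\<^sub>v (Suc d)"
        then have "RM M w = (\<lambda>_. 0)" unfolding Rx embv_def by simp
        with False show False by simp
      qed
      have "eigenvalue ?A c" unfolding eigenvalue_def eigenvector_def using Ax xcar xnz by auto
      then have "poly (char_poly ?A) c = 0" using eigenvalue_root_char_poly[OF QA_carrier'] by blast
      then have "(\<Prod>k<Suc d. c - lamC d j k) = 0" unfolding char_poly_main by (simp add: poly_prod del: prod.lessThan_Suc)
      then have "\<exists>k\<in>{..<Suc d}. c - lamC d j k = 0" by (metis finite_lessThan prod_zero_iff)
      then obtain k where k: "k < Suc d" "c = lamC d j k" by auto
      then have "c \<in> set cs" unfolding cs_def by (simp del: upt_Suc)
      then have p0: "(\<Prod>x\<leftarrow>cs. c - x) = 0" by (simp add: prod_list_zero_iff)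
      show ?thesis unfolding eq p0 by simp
    qed
  qed
  have RMe0: "RM M e0 = e0" unfolding RM_def e0_def by (auto simp: basis_vec_def pt_def)
  have "e0 = (\<lambda>a. \<Sum>i<length ws. RM M (ws ! i) a)"
  proof
    fix a
    have "e0 a = RM M e0 a" unfolding RMe0 ..
    also have "\<dots> = (\<Sum>i<length ws. RM M (ws ! i) a)"
      unfolding e0ws RM_def by (simp add: sum_list_sum_nth atLeast0LessThan)
    finally show "e0 a = (\<Sum>i<length ws. RM M (ws ! i) a)" .
  qed
  then have "HQ ?g j cs e0 = (\<lambda>a. \<Sum>i<length ws. HQ ?g j cs (RM M (ws ! i)) a)"
    using HQ_sum by metis
  also have "\<dots> = (\<lambda>_. 0)" using zero by (auto intro!: sum.neutral)
  finally have H0: "HQ ?g j cs e0 = (\<lambda>_. 0)" .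
  have "HQ ?g j cs e0 (pt ?g M (length cs)) \<noteq> 0"
    unfolding e0_def by (rule kill[OF lencs, THEN conjunct2], unfold M_def, rule Gam_nz_kill[OF j2 je])
  with H0 show False by simp
qed



lemma lam_eq: "lamC d j k = lamC d j l \<longleftrightarrow> k = l \<or> real k + real l = real d - 2*j - 1"
proof -
  define x where "x = j + wt (real d/2) k"
  define y where "y = j + wt (real d/2) l"
  have key: "x * (x + 1) - y * (y + 1) = (real k - real l) * (2*j - real d + real k + real l + 1)"
    unfolding x_def y_def wt_def by (simp add: field_simps)
  have lk: "lamC d j k = of_real (- x * (x + 1))" unfolding lamC_def x_def ..
  have ll: "lamC d j l = of_real (- y * (y + 1))" unfolding lamC_def y_def ..
  have "lamC d j k = lamC d j l \<longleftrightarrow> x * (x + 1) = y * (y + 1)"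
    unfolding lk ll by (simp only: of_real_eq_iff, simp)
  also have "\<dots> \<longleftrightarrow> x * (x + 1) - y * (y + 1) = 0" by simp
  also have "\<dots> \<longleftrightarrow> (real k - real l) * (2*j - real d + real k + real l + 1) = 0"
    unfolding key ..
  also have "\<dots> \<longleftrightarrow> k = l \<or> real k + real l = real d - 2*j - 1" by auto
  finally show ?thesis .
qed

lemma inj_iff:
  assumes j2: "2 * j \<in> \<int>"
  shows "inj_on (lamC d j) {..<Suc d} \<longleftrightarrow> (j > real d/2 - 1 \<or> j < - (real d/2))"
proof
  assume inj: "inj_on (lamC d j) {..<Suc d}"
  show "j > real d/2 - 1 \<or> j < - (real d/2)"
  proof (rule ccontr)
    assume "\<not> ?thesis"
    then have lo: "j \<le> real d/2 - 1" and hi: "j \<ge> - (real d/2)" by auto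
    obtain z where z: "2 * j = of_int z" using j2 Ints_cases by blast
    define s where "s = nat (int d - z - 1)"
    have zs: "real_of_int z \<le> real d - 2" "real_of_int z \<ge> - real d" using lo hi z by linarith+
    then have zs': "z \<le> int d - 2" "z \<ge> - int d" by linarith+
    have s: "real s = real d - 2 * j - 1" unfolding s_def using zs' z by simp
    have s1: "1 \<le> s" "s \<le> 2 * d - 1" unfolding s_def using zs' by auto
    show False
    proof (cases "s \<le> d")
      case True
      have "lamC d j s = lamC d j 0" unfolding lam_eq using s by simp
      moreover have "s \<noteq> 0" using s1 by simp
      ultimately show False using inj True by (auto simp: inj_on_def)
    next
      case False
      have "real d + real (s - d) = real d - 2 * j - 1" using s False by simp
      then have "lamC d j d = lamC d j (s - d)" unfolding lam_eq by simp
      moreover have "s - d < d" using s1 False by auto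
      ultimately have "d = s - d" using inj_onD[OF inj] by auto
      then show False using \<open>s - d < d\<close> by simp
    qed
  qed
next
  assume C: "j > real d/2 - 1 \<or> j < - (real d/2)"
  show "inj_on (lamC d j) {..<Suc d}"
  proof (rule inj_onI)
    fix k l assume k: "k \<in> {..<Suc d}" and l: "l \<in> {..<Suc d}" and e: "lamC d j k = lamC d j l"
    show "k = l"
    proof (rule ccontr)
      assume ne: "k \<noteq> l"
      then have s: "real k + real l = real d - 2*j - 1" using e lam_eq by blast
      have "k \<le> d" "l \<le> d" using k l by auto
      then have "k + l \<le> 2 * d - 1" "1 \<le> k + l" using ne by auto
      then have "real (k + l) \<le> real (2 * d - 1)" "1 \<le> real (k + l)" by linarith+
      moreover have "real (2 * d - 1) = 2 * real d - 1" using \<open>1 \<le> k + l\<close> \<open>k + l \<le> 2 * d - 1\<close> by simp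
      ultimately show False using s C by simp
    qed
  qed
qed

theorem mainTheorem8:
  fixes \<gamma> \<epsilon> j :: real
  assumes "\<exists>d::nat. d \<ge> 1 \<and> \<gamma> = real d / 2"
    and "\<epsilon> = 0 \<or> \<epsilon> = 1/2"
    and "2 * j \<in> \<int>"
    and "j - \<epsilon> \<notin> \<int>"
  shows "(\<forall>M. M - \<epsilon> - \<gamma> \<in> \<int> \<longrightarrow>
            char_poly (Q_mat_VM \<gamma> j M) =
              (\<Prod>k<fdim \<gamma>. [: - complex_of_real (- (j + wt \<gamma> k) * (j + wt \<gamma> k + 1)), 1 :]))
       \<and> (diagonalisable_on (tens_space \<gamma> \<epsilon>) (Q_op \<gamma> j) \<longleftrightarrow> j > \<gamma> - 1 \<or> j < - \<gamma>)"
proof -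
  from assms(1) obtain d :: nat where g: "\<gamma> = real d / 2" by auto
  have cp: "char_poly (Q_mat_VM \<gamma> j M) =
              (\<Prod>k<fdim \<gamma>. [: - complex_of_real (- (j + wt \<gamma> k) * (j + wt \<gamma> k + 1)), 1 :])" for M
    unfolding g char_poly_main by (simp add: lamC_def)
  have dg: "diagonalisable_on (tens_space \<gamma> \<epsilon>) (Q_op \<gamma> j) \<longleftrightarrow> j > \<gamma> - 1 \<or> j < - \<gamma>"
  proof
    assume "diagonalisable_on (tens_space \<gamma> \<epsilon>) (Q_op \<gamma> j)"
    then have "inj_on (lamC d j) {..<Suc d}" using nondiag[OF assms(3) assms(4)] unfolding g by blast
    then show "j > \<gamma> - 1 \<or> j < - \<gamma>" using inj_iff[OF assms(3)] unfolding g by blast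
  next
    assume "j > \<gamma> - 1 \<or> j < - \<gamma>"
    then have "inj_on (lamC d j) {..<Suc d}" using inj_iff[OF assms(3)] unfolding g by blast
    then show "diagonalisable_on (tens_space \<gamma> \<epsilon>) (Q_op \<gamma> j)" unfolding g by (rule diag_if_inj)
  qed
  show ?thesis using cp dg by blast
qed

end
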